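(* Let $(F,t)\in U$ with $t\neq0$ and suppose $Y=Y_{F,t}$ is smooth and contains no plane. Then $Y$ has no Eckardt point on $\hat C_1\cup\hat C_2$.
   Context: $U=U_0\times\mathbb{A}^1$, where $U_0$ is the space of cubic forms $F(x_0,\dots,x_3)$ such that the curve cut out by $F$ on the quadric $x_0x_3=x_1x_2$ in $\mathbb{P}^3$ is smooth, avoids $[0,0,0,1]$, and is tangent with multiplicity $2$ to the lines $x_0=x_1=0$ and $x_0=x_2=0$. $Y_{F,t}\subset\mathbb{P}^5$ is $x_4^3-F(x_0,\dots,x_3)+x_5(x_0x_3-x_1x_2)+t\,x_0x_5^2=0$. $C_i=(x_0=x_i=x_5=0)\cap(x_4^3=F)$ and $\hat C_i\subset Y$ is the cone over $C_i$ with vertex $p_0=[0,\dots,0,1]$. An Eckardt point of a smooth cubic fourfold $Y$ is a point $p\in Y$ such that $Y\cap T_pY$ is a cone with vertex $p$, where $T_pY$ is the projective tangent hyperplane at $p$. *)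

theory Defs
  imports "HOL-Analysis.Analysis"
begin

text \<open>Points of affine space C^(n+1) (homogeneous coordinates of P^n) are represented
  as functions nat => complex; only the coordinates 0..n are relevant.\<close>

definition nonzero_pt :: "nat \<Rightarrow> (nat \<Rightarrow> complex) \<Rightarrow> bool" where
  "nonzero_pt n x \<longleftrightarrow> (\<exists>i\<le>n. x i \<noteq> 0)"

definition monoms :: "nat \<Rightarrow> nat \<Rightarrow> (nat \<Rightarrow> nat) set" where
  "monoms n d = {e. (\<forall>i\<ge>n. e i = 0) \<and> (\<Sum>i<n. e i) = d}"

definition homog_form :: "nat \<Rightarrow> nat \<Rightarrow> ((nat \<Rightarrow> complex) \<Rightarrow> complex) \<Rightarrow> bool" where
  "homog_form n d F \<longleftrightarrow>
     (\<exists>coef :: (nat \<Rightarrow> nat) \<Rightarrow> complex.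
        \<forall>x. F x = (\<Sum>e\<in>monoms n d. coef e * (\<Prod>i<n. x i ^ e i)))"

definition pd :: "((nat \<Rightarrow> complex) \<Rightarrow> complex) \<Rightarrow> nat \<Rightarrow> (nat \<Rightarrow> complex) \<Rightarrow> complex" where
  "pd G i x = deriv (\<lambda>z. G (x(i := z))) (x i)"

definition Qf :: "(nat \<Rightarrow> complex) \<Rightarrow> complex" where
  "Qf x = x 0 * x 3 - x 1 * x 2"

definition unit_pt :: "nat \<Rightarrow> nat \<Rightarrow> complex" where
  "unit_pt k = (\<lambda>i. if i = k then 1 else 0)"

definition curve_smooth :: "((nat \<Rightarrow> complex) \<Rightarrow> complex) \<Rightarrow> bool" where
  "curve_smooth F \<longleftrightarrow>
     (\<forall>x. nonzero_pt 3 x \<and> Qf x = 0 \<and> F x = 0 \<longrightarrow>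
        (\<forall>a b. (\<forall>i\<le>3. a * pd Qf i x + b * pd F i x = 0) \<longrightarrow> a = 0 \<and> b = 0))"

definition double_root :: "(complex \<Rightarrow> complex \<Rightarrow> complex) \<Rightarrow> bool" where
  "double_root f \<longleftrightarrow>
     (\<exists>a b l1 l2. (a, b) \<noteq> (0, 0) \<and> l1 * a + l2 * b \<noteq> 0 \<and>
        (\<forall>s u. f s u = (b * s - a * u)^2 * (l1 * s + l2 * u)))"

text \<open>The curve is tangent with multiplicity 2 to the line x0 = x1 = 0 (resp. x0 = x2 = 0),
  i.e. the restriction of F to the line (which lies on Q) has a root of multiplicity 2.\<close>
definition U0 :: "((nat \<Rightarrow> complex) \<Rightarrow> complex) set" where
  "U0 = {F. homog_form 4 3 F \<and> curve_smooth F \<and> F (unit_pt 3) \<noteq> 0 \<and>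
            double_root (\<lambda>s u. F ((\<lambda>_. 0)(2 := s, 3 := u))) \<and>
            double_root (\<lambda>s u. F ((\<lambda>_. 0)(1 := s, 3 := u)))}"

definition Yeq :: "((nat \<Rightarrow> complex) \<Rightarrow> complex) \<Rightarrow> complex \<Rightarrow> (nat \<Rightarrow> complex) \<Rightarrow> complex" where
  "Yeq F t x = x 4 ^ 3 - F x + x 5 * (x 0 * x 3 - x 1 * x 2) + t * x 0 * x 5 ^ 2"

definition smooth_hyp :: "nat \<Rightarrow> ((nat \<Rightarrow> complex) \<Rightarrow> complex) \<Rightarrow> bool" where
  "smooth_hyp n G \<longleftrightarrow>
     \<not> (\<exists>x. nonzero_pt n x \<and> G x = 0 \<and> (\<forall>i\<le>n. pd G i x = 0))"

definition contains_plane :: "((nat \<Rightarrow> complex) \<Rightarrow> complex) \<Rightarrow> bool" where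
  "contains_plane G \<longleftrightarrow>
     (\<exists>u v w. (\<forall>a b c. (\<forall>i\<le>5. a * u i + b * v i + c * w i = 0) \<longrightarrow> a = 0 \<and> b = 0 \<and> c = 0) \<and>
              (\<forall>a b c. G (\<lambda>i. a * u i + b * v i + c * w i) = 0))"

text \<open>Eckardt point of the (smooth) cubic fourfold G = 0 in P^5: p lies on Y and
  Y \<inter> T_pY is a cone with vertex p, i.e. every line joining p to a point of Y \<inter> T_pY
  lies in Y \<inter> T_pY (it lies in T_pY automatically).\<close>
definition eckardt :: "((nat \<Rightarrow> complex) \<Rightarrow> complex) \<Rightarrow> (nat \<Rightarrow> complex) \<Rightarrow> bool" where
  "eckardt G p \<longleftrightarrow> nonzero_pt 5 p \<and> G p = 0 \<and>
     (\<forall>q. G q = 0 \<and> (\<Sum>i\<le>5. pd G i p * q i) = 0 \<longrightarrow>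
        (\<forall>a b. G (\<lambda>i. a * p i + b * q i) = 0))"

definition Ccurve :: "((nat \<Rightarrow> complex) \<Rightarrow> complex) \<Rightarrow> nat \<Rightarrow> (nat \<Rightarrow> complex) set" where
  "Ccurve F k = {c. nonzero_pt 5 c \<and> c 0 = 0 \<and> c k = 0 \<and> c 5 = 0 \<and> c 4 ^ 3 = F c}"

definition Chat :: "((nat \<Rightarrow> complex) \<Rightarrow> complex) \<Rightarrow> nat \<Rightarrow> (nat \<Rightarrow> complex) set" where
  "Chat F k = {x. nonzero_pt 5 x \<and>
     (\<exists>a b c. c \<in> Ccurve F k \<and> x = (\<lambda>i. a * unit_pt 5 i + b * c i))}"

end

theory Submission imports Defs begin

lemma cube_root: "\<exists>w::complex. w^3 = z"
proof (cases "z = 0")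
  case True then show ?thesis by (intro exI[of _ 0]) simp
next
  case False
  have "exp (Ln z / 3) ^ 3 = exp (of_nat 3 * (Ln z / 3))" by (rule exp_of_nat_mult[symmetric])
  also have "\<dots> = z" using False by simp
  finally show ?thesis by blast
qed

lemma dep: assumes "homog_form 4 d F" "\<forall>i<4. x i = y i" shows "F x = F y"
proof -
  obtain coef where c: "\<And>x. F x = (\<Sum>e\<in>monoms 4 d. coef e * (\<Prod>i<4. x i ^ e i))"
    using assms(1) unfolding homog_form_def by blast
  show ?thesis unfolding c using assms(2) by (intro sum.cong refl arg_cong2[where f="(*)"] prod.cong) auto
qed

lemma hom: assumes "homog_form 4 d F" shows "F (\<lambda>i. c * x i) = c ^ d * F x"
proof -
  obtain coef where cf: "\<And>x. F x = (\<Sum>e\<in>monoms 4 d. coef e * (\<Prod>i<4. x i ^ e i))"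
    using assms(1) unfolding homog_form_def by blast
  have "F (\<lambda>i. c * x i) = (\<Sum>e\<in>monoms 4 d. coef e * (c ^ d * (\<Prod>i<4. x i ^ e i)))"
    unfolding cf
  proof (intro sum.cong refl)
    fix e assume "e \<in> monoms 4 d"
    then have s: "(\<Sum>i<4. e i) = d" by (simp add: monoms_def)
    have "(\<Prod>i<4. (c * x i) ^ e i) = (\<Prod>i<4. c ^ e i) * (\<Prod>i<4. x i ^ e i)"
      by (simp add: power_mult_distrib prod.distrib)
    also have "(\<Prod>i<4. c ^ e i) = c ^ d" using s power_sum[of c e "{..<4}"] by simp
    finally show "coef e * (\<Prod>i<4. (c * x i) ^ e i) = coef e * (c ^ d * (\<Prod>i<4. x i ^ e i))" by simp
  qed
  also have "\<dots> = c ^ d * F x" unfolding cf by (simp add: sum_distrib_left algebra_simps)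
  finally show ?thesis .
qed

lemma pd_eq: assumes "\<And>z. G (x(i:=z)) = g z" "(g has_field_derivative D) (at (x i))"
  shows "pd G i x = D"
proof -
  have "(\<lambda>z. G (x(i:=z))) = g" using assms(1) by auto
  then show ?thesis unfolding pd_def using DERIV_imp_deriv[OF assms(2)] by simp
qed

lemma main_case:
  fixes F :: "(nat \<Rightarrow> complex) \<Rightarrow> complex" and t :: complex and p :: "nat \<Rightarrow> complex"
  assumes homF: "homog_form 4 3 F" and e3: "F (unit_pt 3) \<noteq> 0"
    and jk: "(j = 1 \<and> k = 2) \<or> (j = 2 \<and> k = (1::nat))"
    and dr: "\<And>s u. F ((\<lambda>_. 0)(k := s, 3 := u)) = (B * s - A * u)^2 * (l1 * s + l2 * u)"
    and AB: "l1*A + l2*B \<noteq> 0"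
    and p0: "p 0 = 0" and pj: "p j = 0" and p4: "p 4 ^ 3 = F p" and nz: "nonzero_pt 5 p"
    and eck: "eckardt (Yeq F t) p" and np: "\<not> contains_plane (Yeq F t)"
  shows False
proof -
  define G where "G = Yeq F t"
  have fF: "F x = (B*x k - A*x 3)^2*(l1*x k + l2*x 3)" if "x 0 = 0" "x j = 0" for x
  proof -
    have "F x = F ((\<lambda>_. 0)(k := x k, 3 := x 3))"
      by (rule dep[OF homF]) (use that jk in \<open>auto simp: less_Suc_eq numeral_eq_Suc\<close>)
    then show ?thesis using dr by simp
  qed
  have Gf: "G x = x 4 ^ 3 - F x" if "x 0 = 0" "x j = 0" for x
    using that jk unfolding G_def Yeq_def by auto
  have E: "\<And>q. G q = 0 \<Longrightarrow> (\<Sum>i\<le>5. pd G i p * q i) = 0 \<Longrightarrow> G (\<lambda>i. a * p i + b * q i) = 0" for a b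
    using eck unfolding eckardt_def G_def by blast
  define U1 where "U1 = B * p k - A * p 3"
  define U2 where "U2 = l1 * p k + l2 * p 3"
  define X where "X = p 4"
  define D where "D = B*l2 + A*l1"
  have D0: "D \<noteq> 0" using AB unfolding D_def by (simp add: algebra_simps)
  have XU: "X^3 = U1^2 * U2" using p4 fF[OF p0 pj] unfolding X_def U1_def U2_def by simp
  have kne: "k \<noteq> j" "k \<noteq> 0" "k \<noteq> 3" "k \<noteq> 4" "k \<noteq> 5" "j \<noteq> 0" "j \<noteq> 3" "j \<noteq> 4" "j \<noteq> 5"
    using jk by auto
  have kj5: "k \<le> 5" "j \<le> 5" using jk by auto
  have pdk: "pd G k p = -(2*B*U1*U2 + U1^2*l1)"
  proof (rule pd_eq)
    fix z show "G (p(k:=z)) = X^3 - (B*z - A*p 3)^2*(l1*z+l2*p 3)"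
      using kne p0 pj by (subst Gf) (auto simp: fF X_def)
    show "((\<lambda>z. X^3 - (B*z - A*p 3)^2*(l1*z+l2*p 3)) has_field_derivative -(2*B*U1*U2 + U1^2*l1)) (at (p k))"
      unfolding U1_def U2_def by (rule derivative_eq_intros refl | simp add: algebra_simps power2_eq_square)+
  qed
  have pd3: "pd G 3 p = -(-2*A*U1*U2 + U1^2*l2)"
  proof (rule pd_eq)
    fix z show "G (p(3:=z)) = X^3 - (B*p k - A*z)^2*(l1*p k+l2*z)"
      using kne p0 pj by (subst Gf) (auto simp: fF X_def)
    show "((\<lambda>z. X^3 - (B*p k - A*z)^2*(l1*p k+l2*z)) has_field_derivative -(-2*A*U1*U2 + U1^2*l2)) (at (p 3))"
      unfolding U1_def U2_def by (rule derivative_eq_intros refl | simp add: algebra_simps power2_eq_square)+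
  qed
  have pd4: "pd G 4 p = 3 * X^2"
  proof (rule pd_eq)
    fix z have "F (p(4:=z)) = F p" by (rule dep[OF homF]) auto
    then show "G (p(4:=z)) = z^3 - F p"
      using kne p0 pj by (subst Gf) auto
    show "((\<lambda>z. z^3 - F p) has_field_derivative 3 * X^2) (at (p 4))"
      unfolding X_def by (rule derivative_eq_intros refl | simp)+
  qed
  have pd5: "pd G 5 p = 0"
  proof (rule pd_eq)
    fix z have "F (p(5:=z)) = F p" by (rule dep[OF homF]) auto
    then show "G (p(5:=z)) = X^3 - F p"
      using kne p0 pj by (subst Gf) (auto simp: X_def)
    show "((\<lambda>z. X^3 - F p) has_field_derivative 0) (at (p 5))"
      by (rule derivative_eq_intros refl | simp)+
  qed
  have sum6: "\<And>g::nat\<Rightarrow>complex. (\<Sum>i\<le>5. g i) = g 0 + g 1 + g 2 + g 3 + g 4 + g 5"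
    by (simp add: atMost_Suc numeral_eq_Suc add_ac)
  have tang: "(\<Sum>i\<le>5. pd G i p * q i) = pd G k p * q k + pd G 3 p * q 3 + pd G 4 p * q 4"
    if "q 0 = 0" "q j = 0" "q 5 = 0" for q
    using jk that by (auto simp: sum6)
  show False
  proof (cases "X = 0")
    case False
    define q where "q = (\<lambda>i. if i = k then (l2*U1 + A*(-8*U2))/D else if i = 3 then (B*(-8*U2) - l1*U1)/D else if i = 4 then -2*X else 0)"
    have qv: "q 0 = 0" "q j = 0" "q 5 = 0" "q 4 = -2*X" using kne unfolding q_def by auto
    have qk: "q k = (l2*U1 + A*(-8*U2))/D" and q3: "q 3 = (B*(-8*U2) - l1*U1)/D" using kne unfolding q_def by auto
    have "B*q k - A*q 3 = (B*(l2*U1 + A*(-8*U2)) - A*(B*(-8*U2) - l1*U1))/D"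
      unfolding qk q3 using D0 by (simp add: field_simps)
    also have "\<dots> = (D*U1)/D" unfolding D_def by (simp add: algebra_simps)
    finally have L1q: "B*q k - A*q 3 = U1" using D0 by simp
    have "l1*q k + l2*q 3 = (l1*(l2*U1 + A*(-8*U2)) + l2*(B*(-8*U2) - l1*U1))/D"
      unfolding qk q3 using D0 by (simp add: field_simps)
    also have "\<dots> = (D*(-8*U2))/D" unfolding D_def by (simp add: algebra_simps)
    finally have L2q: "l1*q k + l2*q 3 = -8*U2" using D0 by simp
    have "G q = (-2*X)^3 - U1^2 * (-8*U2)" using qv L1q L2q by (simp add: Gf fF)
    then have Gq: "G q = 0" using XU by (simp add: algebra_simps)
    have "(\<Sum>i\<le>5. pd G i p * q i) = -2*U1*U2*(B*q k - A*q 3) - U1^2*(l1*q k + l2*q 3) + 3*X^2*q 4"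
      using qv by (simp add: tang pdk pd3 pd4) (simp add: algebra_simps power2_eq_square)
    also have "\<dots> = 6 * (U1^2 * U2) - 6 * X^3" unfolding L1q L2q qv by (simp add: algebra_simps power2_eq_square power3_eq_cube)
    finally have T: "(\<Sum>i\<le>5. pd G i p * q i) = 0" using XU by simp
    have "G (\<lambda>i. 1 * p i + 1 * q i) = (X - 2*X)^3 - ((B*p k - A*p 3) + (B*q k - A*q 3))^2 * ((l1*p k + l2*p 3) + (l1*q k + l2*q 3))"
      using qv p0 pj by (simp add: Gf fF X_def) (simp add: algebra_simps)
    also have "\<dots> = 27 * X^3" unfolding L1q L2q U1_def[symmetric] U2_def[symmetric] using XU
      by (simp add: algebra_simps power2_eq_square power3_eq_cube)
    finally show False using E[OF Gq T, of 1 1] False by simp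
  next
    case X0: True
    have pk3: "U1 = 0 \<Longrightarrow> U2 = 0 \<Longrightarrow> p k = 0 \<and> p 3 = 0"
    proof -
      assume "U1 = 0" "U2 = 0"
      have "D * p k = l2*U1 + A*U2" "D * p 3 = B*U2 - l1*U1"
        by (simp_all add: D_def U1_def U2_def algebra_simps)
      then show ?thesis using D0 \<open>U1 = 0\<close> \<open>U2 = 0\<close> by simp
    qed
    show False
    proof (cases "p k = 0 \<and> p 3 = 0")
      case vert: True
      have pz: "p i = 0" if "i < 5" for i
      proof -
        have "i = 0 \<or> i = 1 \<or> i = 2 \<or> i = 3 \<or> i = 4" using that by auto
        then show ?thesis using jk vert p0 pj X0 unfolding X_def by auto
      qed
      have pz': "p 0 = 0" "p 1 = 0" "p 2 = 0" "p 3 = 0" "p 4 = 0" using pz by auto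
      have p5: "p 5 \<noteq> 0"
      proof -
        obtain i where "i \<le> 5" "p i \<noteq> 0" using nz unfolding nonzero_pt_def by blast
        then show ?thesis using pz[of i] by (cases "i = 5") auto
      qed
      have pdv: "pd G i p = 0" if "i = 1 \<or> i = 2" for i
      proof (rule pd_eq)
        fix z
        have "F (p(i:=z)) = F (\<lambda>n. z * unit_pt i n)"
          by (rule dep[OF homF]) (use pz that in \<open>auto simp: unit_pt_def\<close>)
        also have "\<dots> = z^3 * F (unit_pt i)" by (rule hom[OF homF])
        finally show "G (p(i:=z)) = - (z^3 * F (unit_pt i))"
          unfolding G_def Yeq_def using pz' that by auto
        show "((\<lambda>z. - (z^3 * F (unit_pt i))) has_field_derivative 0) (at (p i))"
          using pz' that by (auto intro!: derivative_eq_intros)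
      qed
      define qb where "qb = (\<lambda>i::nat. if i = 1 \<or> i = 2 then (1::complex) else 0)"
      define \<mu> where "\<mu> = - F qb"
      define q where "q = qb(5 := \<mu>)"
      have Fq: "F (\<lambda>i. 1 * p i + 1 * q i) = F qb" "F q = F qb"
        by (rule dep[OF homF]; use pz in \<open>auto simp: q_def\<close>)+
      have Gq: "G q = 0" unfolding G_def Yeq_def using Fq by (simp add: q_def qb_def \<mu>_def)
      have T: "(\<Sum>i\<le>5. pd G i p * q i) = 0"
        by (simp add: sum6 pdv pd5 q_def qb_def)
      have "G (\<lambda>i. 1 * p i + 1 * q i) = - p 5" unfolding G_def Yeq_def using Fq pz'
        by (simp add: q_def qb_def \<mu>_def)
      then show False using E[OF Gq T, of 1 1] p5 by simp
    next
      case nv: False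
      show False
      proof (cases "U1 = 0")
        case U10: True
        have U2: "U2 \<noteq> 0" using pk3 U10 nv by blast
        define q where "q = (\<lambda>i. if i = k then l2/D else if i = 3 then -l1/D else 0)"
        have qv: "q 0 = 0" "q j = 0" "q 5 = 0" "q 4 = 0" using kne unfolding q_def by auto
        have qk: "q k = l2/D" and q3: "q 3 = -l1/D" using kne unfolding q_def by auto
        have "B*q k - A*q 3 = (B*l2 + A*l1)/D" unfolding qk q3 using D0 by (simp add: field_simps)
        then have L1q: "B*q k - A*q 3 = 1" using D0 unfolding D_def by simp
        have "l1*q k + l2*q 3 = (l1*l2 - l2*l1)/D" unfolding qk q3 using D0 by (simp add: field_simps)
        then have L2q: "l1*q k + l2*q 3 = 0" by simp
        have Gq: "G q = 0" using qv L1q L2q by (simp add: Gf fF)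
        have T: "(\<Sum>i\<le>5. pd G i p * q i) = 0" using qv U10 by (simp add: tang pdk pd3 pd4)
        have "G (\<lambda>i. 1 * p i + 1 * q i) = (X + q 4)^3 - ((B*p k - A*p 3) + (B*q k - A*q 3))^2 * ((l1*p k + l2*p 3) + (l1*q k + l2*q 3))"
          using qv p0 pj by (simp add: Gf fF X_def) (simp add: algebra_simps)
        also have "\<dots> = - U2" unfolding L1q L2q U1_def[symmetric] U2_def[symmetric] using X0 U10 qv
          by simp
        finally show False using E[OF Gq T, of 1 1] U2 by simp
      next
        case U1: False
        have U20: "U2 = 0" using XU X0 U1 by simp
        have pkn: "p k \<noteq> 0"
        proof
          assume pk: "p k = 0"
          then have "l2 * p 3 = 0" "- A * p 3 \<noteq> 0" using U20 U1 unfolding U1_def U2_def by auto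
          then have l2: "l2 = 0" by auto
          have "F (unit_pt 3) = F ((\<lambda>_. 0)(k := 0, 3 := 1))"
            by (rule dep[OF homF]) (use kne in \<open>auto simp: unit_pt_def\<close>)
          then show False using e3 dr l2 by simp
        qed
        define \<alpha> where "\<alpha> = pd G j p"
        define \<beta> where "\<beta> = pd G 3 p"
        define qj where "qj = (if \<alpha> = 0 \<and> \<beta> = 0 then 1 else \<beta>)"
        define q3 where "q3 = (if \<alpha> = 0 \<and> \<beta> = 0 then 0 else -\<alpha>)"
        have lin: "\<alpha> * qj + \<beta> * q3 = 0" unfolding qj_def q3_def by auto
        have qnz: "qj \<noteq> 0 \<or> q3 \<noteq> 0" unfolding qj_def q3_def by auto
        define qb where "qb = (\<lambda>i. if i = j then qj else if i = 3 then q3 else 0)"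
        obtain w where w: "w^3 = F qb" using cube_root by blast
        define q where "q = qb(4 := w)"
        have qv: "q 0 = 0" "q k = 0" "q 5 = 0" "q j = qj" "q 3 = q3" "q 4 = w"
          using kne unfolding q_def qb_def by auto
        have Fq: "F q = F qb" by (rule dep[OF homF]) (auto simp: q_def)
        have tang2: "(\<Sum>i\<le>5. pd G i p * r i) = pd G j p * r j + pd G 3 p * r 3 + pd G 4 p * r 4 + pd G 5 p * r 5"
          if "r 0 = 0" "r k = 0" for r
          using jk that by (auto simp: sum6)
        have plane: "G (\<lambda>i. a * p i + b * unit_pt 5 i + c * q i) = 0" for a b c
        proof -
          define r where "r = (\<lambda>i. b * unit_pt 5 i + c * q i)"
          have rv: "r 0 = 0" "r k = 0" "r j = c * qj" "r 3 = c * q3" "r 4 = c * w" "r 5 = b"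
            using kne qv unfolding r_def unit_pt_def by auto
          have Fr: "F r = F (\<lambda>i. c * q i)" by (rule dep[OF homF]) (auto simp: r_def unit_pt_def)
          also have "\<dots> = c^3 * F q" by (rule hom[OF homF])
          finally have Fr: "F r = c^3 * w^3" using Fq w by simp
          have r12: "r 1 * r 2 = 0" using jk rv by auto
          have Gr: "G r = 0" unfolding G_def Yeq_def using rv r12 Fr by (simp add: power_mult_distrib)
          have Tr: "(\<Sum>i\<le>5. pd G i p * r i) = 0"
            using rv lin X0 by (simp add: tang2 pd4 pd5 \<alpha>_def[symmetric] \<beta>_def[symmetric]) (metis distrib_left mult.left_commute mult_zero_right)
          have "(\<lambda>i. a * p i + b * unit_pt 5 i + c * q i) = (\<lambda>i. a * p i + 1 * r i)"
            unfolding r_def by (simp add: algebra_simps)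
          then show ?thesis using E[OF Gr Tr, of a 1] by simp
        qed
        have indep: "a = 0 \<and> b = 0 \<and> c = 0"
          if h: "\<forall>i\<le>5. a * p i + b * unit_pt 5 i + c * q i = 0" for a b c
        proof -
          have "a * p k = 0" using h[rule_format, of k] kne kj5 qv by (auto simp: unit_pt_def)
          then have a: "a = 0" using pkn by simp
          have "c * qj = 0" using h[rule_format, of j] kne kj5 qv pj by (auto simp: unit_pt_def)
          moreover have "c * q3 = 0" using h[rule_format, of 3] a qv by (auto simp: unit_pt_def)
          ultimately have c: "c = 0" using qnz by auto
          have "b = 0" using h[rule_format, of 5] a c by (auto simp: unit_pt_def)
          then show ?thesis using a c by simp
        qed
        have "contains_plane (Yeq F t)" unfolding contains_plane_def
          using plane indep unfolding G_def by blast
        then show False using np by simp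
      qed
    qed
  qed
qed

lemma chat_case:
  fixes F :: "(nat \<Rightarrow> complex) \<Rightarrow> complex" and t :: complex and p :: "nat \<Rightarrow> complex"
  assumes "F \<in> U0" and jk: "(j = 1 \<and> k = 2) \<or> (j = 2 \<and> k = (1::nat))"
    and dr: "double_root (\<lambda>s u. F ((\<lambda>_. 0)(k := s, 3 := u)))"
    and pc: "p \<in> Chat F j" and eck: "eckardt (Yeq F t) p" and np: "\<not> contains_plane (Yeq F t)"
  shows False
proof -
  have homF: "homog_form 4 3 F" and e3: "F (unit_pt 3) \<noteq> 0" using assms(1) unfolding U0_def by auto
  obtain A B l1 l2 where AB: "l1*A + l2*B \<noteq> 0"
    and f: "\<And>s u. F ((\<lambda>_. 0)(k := s, 3 := u)) = (B * s - A * u)^2 * (l1 * s + l2 * u)"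
    using dr unfolding double_root_def by blast
  obtain a b c where nz: "nonzero_pt 5 p" and c: "c \<in> Ccurve F j" and p: "p = (\<lambda>i. a * unit_pt 5 i + b * c i)"
    using pc unfolding Chat_def by blast
  have c0: "c 0 = 0" "c j = 0" "c 4 ^ 3 = F c" using c unfolding Ccurve_def by auto
  have j05: "j \<noteq> 0" "j \<noteq> 5" "j \<noteq> 4" using jk by auto
  have p0: "p 0 = 0" "p j = 0" using c0 j05 unfolding p unit_pt_def by auto
  have "F p = F (\<lambda>i. b * c i)" by (rule dep[OF homF]) (auto simp: p unit_pt_def)
  also have "\<dots> = b^3 * F c" by (rule hom[OF homF])
  finally have p4: "p 4 ^ 3 = F p" using c0 unfolding p unit_pt_def by (simp add: power_mult_distrib)
  show False by (rule main_case[OF homF e3 jk f AB p0 p4 nz eck np])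
qed

theorem lemma5p9:
  fixes F :: "(nat \<Rightarrow> complex) \<Rightarrow> complex" and t :: complex
  assumes "F \<in> U0"
    and "t \<noteq> 0"
    and "smooth_hyp 5 (Yeq F t)"
    and "\<not> contains_plane (Yeq F t)"
  shows "\<not> (\<exists>p. p \<in> Chat F 1 \<union> Chat F 2 \<and> eckardt (Yeq F t) p)"
proof
  assume "\<exists>p. p \<in> Chat F 1 \<union> Chat F 2 \<and> eckardt (Yeq F t) p"
  then obtain p where p: "p \<in> Chat F 1 \<or> p \<in> Chat F 2" and e: "eckardt (Yeq F t) p" by blast
  have d1: "double_root (\<lambda>s u. F ((\<lambda>_. 0)(2 := s, 3 := u)))"
    and d2: "double_root (\<lambda>s u. F ((\<lambda>_. 0)(1 := s, 3 := u)))" using assms(1) unfolding U0_def by auto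
  from p show False
  proof
    assume "p \<in> Chat F 1"
    then show False using chat_case[OF assms(1) _ d1 _ e assms(4), of 1] by simp
  next
    assume "p \<in> Chat F 2"
    then show False using chat_case[OF assms(1) _ d2 _ e assms(4), of 2] by simp
  qed
qed

end
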